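(* Let $a,b,c\in\mathbb R$ with $c+1>a+b$ and $c$ not a nonpositive integer, and for real $q>-1$ put \[ F(q):={}_3F_2\!\left({a,b,q\atop c,q+1};1\right). \] Then \[ \frac{(q+1-a)(q+1-b)}{q+1}F(q+1)-(q+1-c)F(q)=\frac{\Gamma(c)\,\Gamma(c+1-a-b)}{\Gamma(c-a)\,\Gamma(c-b)}, \] with the convention $1/\Gamma(-n)=0$ for nonnegative integers $n$.
   Context: ${}_3F_2\!\left({a_1,a_2,a_3\atop b_1,b_2};x\right)=\sum_{n\ge0}\frac{(a_1)_n(a_2)_n(a_3)_n}{(b_1)_n(b_2)_n}\frac{x^n}{n!}$ with $(x)_n=x(x+1)\cdots(x+n-1)$; at $x=1$ it converges when $b_1+b_2-a_1-a_2-a_3>0$. *)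

theory Defs
  imports "HOL-Analysis.Analysis"
begin

definition hyp3F2 :: "real \<Rightarrow> real \<Rightarrow> real \<Rightarrow> real \<Rightarrow> real \<Rightarrow> real \<Rightarrow> real" where
  "hyp3F2 a1 a2 a3 b1 b2 x =
     (\<Sum>n. pochhammer a1 n * pochhammer a2 n * pochhammer a3 n
            / (pochhammer b1 n * pochhammer b2 n) * x ^ n / fact n)"

end

theory Submission
  imports Defs "HOL-Real_Asymp.Real_Asymp"
begin

definition tt :: "real \<Rightarrow> real \<Rightarrow> real \<Rightarrow> nat \<Rightarrow> real" where
  "tt a b c n = pochhammer a n * pochhammer b n / (pochhammer c n * fact n)"

definition PP :: "real \<Rightarrow> nat \<Rightarrow> real" where
  "PP z n = pochhammer z n / (fact n * real n powr (z - 1))"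

definition np :: "real \<Rightarrow> bool" where "np c \<longleftrightarrow> (\<forall>n::nat. c \<noteq> - real n)"

lemma np_iff: "np c \<longleftrightarrow> c \<notin> \<int>\<^sub>\<le>\<^sub>0"
proof
  assume "np c"
  then show "c \<notin> \<int>\<^sub>\<le>\<^sub>0" unfolding np_def by (auto elim!: nonpos_Ints_cases')
next
  assume h: "c \<notin> \<int>\<^sub>\<le>\<^sub>0"
  show "np c" unfolding np_def
  proof (intro allI notI)
    fix n :: nat assume "c = - real n"
    then have "c \<in> \<int>\<^sub>\<le>\<^sub>0" by simp
    with h show False by blast
  qed
qed

lemma np_poch: "np c \<Longrightarrow> pochhammer c n \<noteq> 0"
  unfolding np_def by (auto simp: pochhammer_eq_0_iff)

lemma np_rGamma: "np c \<Longrightarrow> rGamma c \<noteq> 0"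
  by (simp add: np_iff rGamma_eq_zero_iff)

lemma np_pos: "c > 0 \<Longrightarrow> np c"
  unfolding np_def
proof (intro allI notI)
  fix n :: nat assume "c > 0" "c = - real n"
  moreover have "- real n \<le> 0" by simp
  ultimately show False by linarith
qed

lemma np_plus: "np c \<Longrightarrow> np (c + real m)"
  unfolding np_def
proof (intro allI notI)
  fix n :: nat assume h: "\<forall>n::nat. c \<noteq> - real n" "c + real m = - real n"
  then have "c = - real (m + n)" by simp
  with h(1) show False by blast
qed

lemma aux_cancel: "(z::real) + n \<noteq> 0 \<Longrightarrow> n \<noteq> 0 \<Longrightarrow> f \<noteq> 0 \<Longrightarrow> p \<noteq> 0 \<Longrightarrow>
   a * (z + n) / (f * (p * n)) * (n / (z + n)) = a / (f * p)"
  by (simp add: divide_simps)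

lemma PP_lim: "PP z \<longlonglongrightarrow> rGamma z"
proof -
  have ev: "eventually (\<lambda>n. rGamma_series z n * (real n / (z + real n)) = PP z n) sequentially"
    using eventually_gt_at_top[of "nat \<lceil>\<bar>z\<bar>\<rceil> + 1"]
  proof eventually_elim
    case (elim n)
    hence n0: "real n > 0" and zn: "z + real n > 0" by linarith+
    have "exp (z * ln (real n)) = real n powr (z - 1) * real n"
      using n0 by (simp add: powr_def exp_diff algebra_simps)
    then have "rGamma_series z n = pochhammer z n * (z + real n) / (fact n * (real n powr (z - 1) * real n))"
      by (simp add: rGamma_series_def pochhammer_Suc)
    then show ?case unfolding PP_def
      using aux_cancel[of z "real n" "fact n" "real n powr (z-1)" "pochhammer z n"] n0 zn by simp
  qed
  have "(\<lambda>n. real n / (z + real n)) \<longlonglongrightarrow> 1" by real_asymp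
  then have "(\<lambda>n. rGamma_series z n * (real n / (z + real n))) \<longlonglongrightarrow> rGamma z * 1"
    by (intro tendsto_intros)
  then have "(\<lambda>n. rGamma_series z n * (real n / (z + real n))) \<longlonglongrightarrow> rGamma z"
    by simp
  from Lim_transform_eventually[OF this ev] show ?thesis .
qed


lemma tt_ratio:
  assumes "np c" "n > 0"
  shows "tt a b c n / real n powr (a + b - c - 1) = PP a n * PP b n / PP c n"
proof -
  define x where "x = real n"
  have x0: "x > 0" using assms(2) by (simp add: x_def)
  have h: "x powr (a - 1) * x powr (b - 1) = x powr (c - 1) * x powr (a + b - c - 1)"
    by (simp add: powr_add[symmetric] algebra_simps)
  have pc: "pochhammer c n \<noteq> 0" using np_poch[OF assms(1)] .
  have f0: "fact n \<noteq> (0::real)" by simp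
  have p1: "x powr (a - 1) > 0" "x powr (b - 1) > 0" "x powr (c - 1) > 0" "x powr (a + b - c - 1) > 0"
    using x0 by simp_all
  show ?thesis
    unfolding tt_def PP_def x_def[symmetric]
    using pc f0 p1 h by (simp add: divide_simps)
qed

lemma tt_asym:
  assumes "np c"
  shows "(\<lambda>n. tt a b c n / real n powr (a + b - c - 1)) \<longlonglongrightarrow> rGamma a * rGamma b / rGamma c"
proof -
  have "(\<lambda>n. PP a n * PP b n / PP c n) \<longlonglongrightarrow> rGamma a * rGamma b / rGamma c"
    using np_rGamma[OF assms] by (intro tendsto_intros PP_lim) auto
  moreover have "eventually (\<lambda>n. PP a n * PP b n / PP c n = tt a b c n / real n powr (a + b - c - 1)) sequentially"
    using eventually_gt_at_top[of 0] by eventually_elim (simp add: tt_ratio[OF assms])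
  ultimately show ?thesis by (rule Lim_transform_eventually)
qed

lemma tt_bound:
  assumes "np c"
  shows "\<exists>M>0. eventually (\<lambda>n. \<bar>tt a b c n\<bar> \<le> M * real n powr (a + b - c - 1)) sequentially"
proof -
  define L where "L = rGamma a * rGamma b / rGamma c"
  have "eventually (\<lambda>n. dist (tt a b c n / real n powr (a + b - c - 1)) L < 1) sequentially"
    unfolding L_def by (rule tendstoD[OF tt_asym[OF assms]]) simp
  then have "eventually (\<lambda>n. \<bar>tt a b c n\<bar> \<le> (\<bar>L\<bar> + 1) * real n powr (a + b - c - 1)) sequentially"
    using eventually_gt_at_top[of 0]
  proof eventually_elim
    case (elim n)
    define p where "p = real n powr (a + b - c - 1)"
    have p0: "p > 0" using elim(2) by (simp add: p_def)
    have "\<bar>tt a b c n / p\<bar> \<le> \<bar>L\<bar> + 1" using elim(1) unfolding p_def[symmetric] dist_real_def by linarith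
    then have "\<bar>tt a b c n\<bar> / p \<le> \<bar>L\<bar> + 1" using p0 by simp
    then show ?case using p0 unfolding p_def[symmetric] by (simp add: divide_simps)
  qed
  moreover have "\<bar>L\<bar> + 1 > 0" by simp
  ultimately show ?thesis by blast
qed

lemma powr_bound_summable:
  fixes f :: "nat \<Rightarrow> real"
  assumes "eventually (\<lambda>n. \<bar>f n\<bar> \<le> M * real n powr e) sequentially" "e < -1"
  shows "summable f"
proof (rule summable_comparison_test_ev)
  show "eventually (\<lambda>n. norm (f n) \<le> M * real n powr e) sequentially" using assms(1) by simp
  show "summable (\<lambda>n. M * real n powr e)"
    using assms(2) by (intro summable_mult) (simp add: summable_real_powr_iff)
qed

lemma powr_bound_zero:
  fixes f :: "nat \<Rightarrow> real"
  assumes "eventually (\<lambda>n. \<bar>f n\<bar> \<le> M * real n powr e) sequentially" "e < 0"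
  shows "f \<longlonglongrightarrow> 0"
proof (rule Lim_null_comparison)
  show "eventually (\<lambda>n. norm (f n) \<le> M * real n powr e) sequentially" using assms(1) by simp
  have "(\<lambda>n. real n powr e) \<longlonglongrightarrow> 0"
    by (rule tendsto_neg_powr[OF assms(2) filterlim_real_sequentially])
  then show "(\<lambda>n. M * real n powr e) \<longlonglongrightarrow> 0"
    by (rule tendsto_mult_right_zero)
qed

lemma tt_summable:
  assumes "np c" "a + b < c"
  shows "summable (tt a b c)" "summable (\<lambda>n. \<bar>tt a b c n\<bar>)"
proof -
  obtain M where "eventually (\<lambda>n. \<bar>tt a b c n\<bar> \<le> M * real n powr (a + b - c - 1)) sequentially"
    using tt_bound[OF assms(1), of a b] by (elim exE conjE) blast
  then show "summable (tt a b c)" "summable (\<lambda>n. \<bar>tt a b c n\<bar>)"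
    using assms(2) by (auto intro!: powr_bound_summable)
qed

lemma tt_zero:
  assumes "np c" "a + b < c + 1"
  shows "tt a b c \<longlonglongrightarrow> 0"
proof -
  obtain M where "eventually (\<lambda>n. \<bar>tt a b c n\<bar> \<le> M * real n powr (a + b - c - 1)) sequentially"
    using tt_bound[OF assms(1), of a b] by (elim exE conjE) blast
  then show ?thesis using assms(2) by (intro powr_bound_zero) auto
qed

lemma tt_n_zero:
  assumes "np c" "a + b < c"
  shows "(\<lambda>n. real n * tt a b c n) \<longlonglongrightarrow> 0"
proof -
  obtain M where M: "M > 0" "eventually (\<lambda>n. \<bar>tt a b c n\<bar> \<le> M * real n powr (a + b - c - 1)) sequentially"
    using tt_bound[OF assms(1), of a b] by (elim exE conjE) blast
  have "eventually (\<lambda>n. \<bar>real n * tt a b c n\<bar> \<le> M * real n powr (a + b - c)) sequentially"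
    using M(2) eventually_gt_at_top[of 0]
  proof eventually_elim
    case (elim n)
    have e: "real n powr (a + b - c) = real n * real n powr (a + b - c - 1)"
    proof -
      have "real n powr (a + b - c) = real n powr ((a + b - c - 1) + 1)" by simp
      also have "\<dots> = real n powr (a + b - c - 1) * real n powr 1" by (rule powr_add)
      finally show ?thesis by simp
    qed
    have "\<bar>real n * tt a b c n\<bar> = real n * \<bar>tt a b c n\<bar>" by (simp add: abs_mult)
    also have "\<dots> \<le> real n * (M * real n powr (a + b - c - 1))"
      using elim(1) by (intro mult_left_mono) auto
    finally show ?case using e by (simp add: algebra_simps)
  qed
  then show ?thesis using assms(2) by (intro powr_bound_zero) auto
qed

lemma np_nz:
  assumes "np c" shows "c + real n \<noteq> 0"
proof
  assume "c + real n = 0"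
  then have "c = - real n" by simp
  with assms show False unfolding np_def by blast
qed

lemma tt_Suc:
  assumes "np c"
  shows "tt a b c (Suc n) = tt a b c n * ((a + real n) * (b + real n) / ((c + real n) * (real n + 1)))"
proof -
  have "pochhammer c n \<noteq> 0" "c + real n \<noteq> 0" using np_poch[OF assms] np_nz[OF assms] by auto
  then show ?thesis unfolding tt_def by (simp add: pochhammer_Suc divide_simps)
qed

lemma poch_shift: "(x::real) * pochhammer (x + 1) n = pochhammer x n * (x + real n)"
  using pochhammer_rec[of x n] pochhammer_Suc[of x n] by simp

lemma aux_shift: "(x::real) / (p * q / c * f) = x / (p * f) * (c / q)"
  by (simp add: divide_inverse inverse_mult_distrib ac_simps)

lemma tt_shift:
  assumes "np c"
  shows "tt a b (c + 1) n = tt a b c n * (c / (c + real n))"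
proof -
  have nz: "pochhammer c n \<noteq> 0" "c + real n \<noteq> 0" "c \<noteq> 0"
    using np_poch[OF assms] np_nz[OF assms, of n] np_nz[OF assms, of 0] by auto
  have e: "pochhammer (c + 1) n = pochhammer c n * (c + real n) / c"
    using poch_shift[of c n] nz by (simp add: divide_simps) (metis mult.commute)
  have "tt a b (c + 1) n = pochhammer a n * pochhammer b n / (pochhammer c n * (c + real n) / c * fact n)"
    unfolding tt_def e ..
  also have "\<dots> = tt a b c n * (c / (c + real n))" unfolding tt_def by (rule aux_shift)
  finally show ?thesis .
qed

lemma auxl: "(d::real) \<noteq> 0 \<Longrightarrow> C \<noteq> 0 \<Longrightarrow>
   (C - a - b) * t - (C - a) * (C - b) / C * (t * (C / d)) = t * (((C - a - b) * d - (C - a) * (C - b)) / d)"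
  by (simp add: field_simps)
lemma auxr: "(d::real) \<noteq> 0 \<Longrightarrow> m \<noteq> 0 \<Longrightarrow>
   - (m * (t * (X / (d * m)))) - - (n * t) = t * ((n * d - X) / d)"
  by (simp add: field_simps)
lemma id_contig:
  fixes C a b t n :: real
  assumes "C \<noteq> 0" "C + n \<noteq> 0" "n + 1 \<noteq> 0"
  shows "(C - a - b) * t - (C - a) * (C - b) / C * (t * (C / (C + n))) =
         - ((n + 1) * (t * ((a + n) * (b + n) / ((C + n) * (n + 1))))) - - (n * t)"
proof -
  have m: "(C - a - b) * (C + n) - (C - a) * (C - b) = n * (C + n) - (a + n) * (b + n)"
    by (simp add: algebra_simps)
  show ?thesis using auxl[of "C + n" C a b t] auxr[of "C + n" "n + 1" t "(a + n) * (b + n)" n] assms m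
    by simp
qed

lemma contig:
  assumes "np C" "a + b < C"
  shows "(C - a - b) * suminf (tt a b C) = (C - a) * (C - b) / C * suminf (tt a b (C + 1))"
proof -
  define K where "K = (C - a) * (C - b) / C"
  define E where "E n = - (real n * tt a b C n)" for n
  have npC1: "np (C + 1)" using np_plus[OF assms(1), of 1] by simp
  have C0: "C \<noteq> 0" using np_nz[OF assms(1), of 0] by simp
  have trm: "(C - a - b) * tt a b C n - K * tt a b (C + 1) n = E (Suc n) - E n" for n
  proof -
    have es: "E (Suc n) = - ((real n + 1) * (tt a b C n * ((a + real n) * (b + real n) / ((C + real n) * (real n + 1)))))"
    proof -
      have es0: "real (Suc n) = real n + 1" by simp
      show ?thesis unfolding E_def tt_Suc[OF assms(1)] es0 by (rule refl)
    qed
    have en: "E n = - (real n * tt a b C n)" by (simp add: E_def)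
    show ?thesis unfolding K_def tt_shift[OF assms(1)] es en
      by (rule id_contig[OF C0 np_nz[OF assms(1)]]) simp
  qed
  have "E \<longlonglongrightarrow> - 0" unfolding E_def by (intro tendsto_minus tt_n_zero assms)
  then have "E \<longlonglongrightarrow> 0" by simp
  then have "(\<lambda>n. E (Suc n) - E n) sums (0 - E 0)" by (rule telescope_sums)
  then have s1: "(\<lambda>n. (C - a - b) * tt a b C n - K * tt a b (C + 1) n) sums 0"
    unfolding trm by (simp add: E_def)
  have s2: "(\<lambda>n. (C - a - b) * tt a b C n - K * tt a b (C + 1) n) sums
      ((C - a - b) * suminf (tt a b C) - K * suminf (tt a b (C + 1)))"
    using tt_summable(1)[OF assms] tt_summable(1)[OF npC1, of a b] assms(2)
    by (intro sums_diff sums_mult summable_sums) auto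
  from sums_unique2[OF s1 s2] show ?thesis unfolding K_def by simp
qed

definition RR :: "real \<Rightarrow> real \<Rightarrow> real \<Rightarrow> nat \<Rightarrow> real" where
  "RR a b C m = pochhammer (C - a) m * pochhammer (C - b) m / (pochhammer C m * pochhammer (C - a - b) m)"

lemma iter:
  assumes "np C" "a + b < C"
  shows "suminf (tt a b C) = RR a b C m * suminf (tt a b (C + real m))"
proof (induction m)
  case 0
  then show ?case by (simp add: RR_def)
next
  case (Suc m)
  define C' where "C' = C + real m"
  have np': "np C'" unfolding C'_def by (rule np_plus[OF assms(1)])
  have lt: "a + b < C'" using assms(2) by (simp add: C'_def)
  have C'0: "C' \<noteq> 0" using np_nz[OF np', of 0] by simp
  have D0: "C' - a - b \<noteq> 0" using lt by simp
  have "suminf (tt a b C') = ((C' - a - b) * suminf (tt a b C')) / (C' - a - b)" using D0 by simp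
  also have "\<dots> = (C' - a) * (C' - b) / C' * suminf (tt a b (C' + 1)) / (C' - a - b)"
    unfolding contig[OF np' lt] ..
  finally have c: "suminf (tt a b C') = (C' - a) * (C' - b) / C' * suminf (tt a b (C' + 1)) / (C' - a - b)" .
  have pC: "pochhammer C m \<noteq> 0" by (rule np_poch[OF assms(1)])
  have pD: "pochhammer (C - a - b) m \<noteq> 0"
    using np_poch[OF np_pos, of "C - a - b"] assms(2) by simp
  have RS: "RR a b C (Suc m) = RR a b C m * ((C' - a) * (C' - b) / C' / (C' - a - b))"
  proof -
    have e: "C - a + real m = C' - a" "C - b + real m = C' - b" "C + real m = C'"
      "C - a - b + real m = C' - a - b" by (simp_all add: C'_def)
    show ?thesis unfolding RR_def pochhammer_Suc e by (simp add: divide_inverse ac_simps)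
  qed
  have eq: "C + real (Suc m) = C' + 1" by (simp add: C'_def)
  have "suminf (tt a b C) = RR a b C m * suminf (tt a b C')" using Suc.IH by (simp add: C'_def)
  also have "\<dots> = RR a b C m * ((C' - a) * (C' - b) / C' * suminf (tt a b (C' + 1)) / (C' - a - b))"
    using c by simp
  also have "\<dots> = RR a b C (Suc m) * suminf (tt a b (C' + 1))"
    unfolding RS by (simp add: divide_inverse ac_simps)
  finally show ?case unfolding eq .
qed

lemma RR_lim:
  assumes "np C" "a + b < C"
  shows "RR a b C \<longlonglongrightarrow> Gamma C * Gamma (C - a - b) * rGamma (C - a) * rGamma (C - b)"
proof -
  have npD: "np (C - a - b)" using np_pos assms(2) by simp
  have "(\<lambda>n. PP (C - a) n * PP (C - b) n / (PP C n * PP (C - a - b) n)) \<longlonglongrightarrow>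
        rGamma (C - a) * rGamma (C - b) / (rGamma C * rGamma (C - a - b))"
    using np_rGamma[OF assms(1)] np_rGamma[OF npD] by (intro tendsto_intros PP_lim) auto
  moreover have "eventually (\<lambda>n. PP (C - a) n * PP (C - b) n / (PP C n * PP (C - a - b) n) = RR a b C n) sequentially"
    using eventually_gt_at_top[of 0]
  proof eventually_elim
    case (elim n)
    define x where "x = real n"
    have x0: "x > 0" using elim by (simp add: x_def)
    have h: "x powr (C - a - 1) * x powr (C - b - 1) = x powr (C - 1) * x powr (C - a - b - 1)"
      by (simp add: powr_add[symmetric] algebra_simps)
    have pc: "pochhammer C n \<noteq> 0" "pochhammer (C - a - b) n \<noteq> 0"
      using np_poch[OF assms(1)] np_poch[OF npD] by auto
    have f0: "fact n \<noteq> (0::real)" by simp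
    have p1: "x powr (C - a - 1) > 0" "x powr (C - b - 1) > 0" "x powr (C - 1) > 0" "x powr (C - a - b - 1) > 0"
      using x0 by simp_all
    show ?case
      unfolding RR_def PP_def x_def[symmetric]
      using pc f0 p1 h by (simp add: divide_simps)
  qed
  ultimately have "RR a b C \<longlonglongrightarrow> rGamma (C - a) * rGamma (C - b) / (rGamma C * rGamma (C - a - b))"
    by (rule Lim_transform_eventually)
  then show ?thesis by (simp add: Gamma_def field_simps)
qed

lemma poch_mono: "0 < (x::real) \<Longrightarrow> x \<le> y \<Longrightarrow> pochhammer x k \<le> pochhammer y k"
proof (induction k)
  case 0 then show ?case by simp
next
  case (Suc k)
  have "pochhammer x k * (x + real k) \<le> pochhammer y k * (y + real k)"
  proof (intro mult_mono)
    show "pochhammer x k \<le> pochhammer y k" using Suc by simp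
    show "x + real k \<le> y + real k" using Suc by simp
    have "0 < y" using Suc.prems by simp
    then show "0 \<le> pochhammer y k" by (intro less_imp_le pochhammer_pos)
    show "0 \<le> x + real k" using Suc.prems by simp
  qed
  then show ?case by (simp add: pochhammer_Suc)
qed

lemma tail_bound:
  assumes "0 < X0" "X0 \<le> X"
  shows "\<bar>tt a b X n - (if n = 0 then 1 else 0)\<bar> \<le> X0 / X * \<bar>tt a b X0 n\<bar>"
proof (cases n)
  case 0
  then show ?thesis using assms by (simp add: tt_def)
next
  case (Suc k)
  define N where "N = \<bar>pochhammer a n * pochhammer b n\<bar>"
  define P where "P = pochhammer (X + 1) k"
  define P0 where "P0 = pochhammer (X0 + 1) k"
  have P0pos: "P0 > 0" unfolding P0_def using assms by (intro pochhammer_pos) auto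
  have PP0: "P0 \<le> P" unfolding P_def P0_def using assms by (intro poch_mono) auto
  have f: "fact n > (0::real)" by simp
  have X0': "X > 0" using assms by simp
  have Ppos: "pochhammer (X + 1) k > 0" using X0' by (intro pochhammer_pos) auto
  have e1: "\<bar>tt a b X n - (if n = 0 then 1 else 0)\<bar> = N / (X * P * fact n)"
    unfolding tt_def N_def P_def using Suc X0' P0pos PP0 f Ppos
    by (simp add: pochhammer_rec abs_mult abs_divide)
  have e2: "\<bar>tt a b X0 n\<bar> = N / (X0 * P0 * fact n)"
    unfolding tt_def N_def P0_def using Suc assms P0pos[unfolded P0_def] f
    by (simp add: pochhammer_rec abs_mult abs_divide)
  have "N / (X * P * fact n) \<le> N / (X * P0 * fact n)"
    using P0pos PP0 f X0' unfolding N_def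
    by (intro divide_left_mono mult_right_mono mult_left_mono mult_pos_pos) auto
  also have "\<dots> = X0 / X * (N / (X0 * P0 * fact n))" using assms by simp
  finally show ?thesis using e1 e2 by simp
qed

lemma tail:
  assumes "np C" "a + b < C"
  shows "(\<lambda>m. suminf (tt a b (C + real m))) \<longlonglongrightarrow> 1"
proof -
  define m0 where "m0 = nat \<lceil>\<bar>C\<bar>\<rceil> + 1"
  define X0 where "X0 = C + real m0"
  have X0pos: "X0 > 0" unfolding X0_def m0_def by linarith
  have npX0: "np X0" using np_pos X0pos by simp
  have ltX0: "a + b < X0" using assms(2) unfolding X0_def by simp
  define S where "S = (\<Sum>n. \<bar>tt a b X0 n\<bar>)"
  have sumS: "summable (\<lambda>n. \<bar>tt a b X0 n\<bar>)" using tt_summable(2)[OF npX0 ltX0] .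
  have "eventually (\<lambda>m. norm (suminf (tt a b (C + real m)) - 1) \<le> X0 / (C + real m) * S) sequentially"
    using eventually_ge_at_top[of m0]
  proof eventually_elim
    case (elim m)
    define X where "X = C + real m"
    have XX: "X0 \<le> X" using elim unfolding X_def X0_def by simp
    have npX: "np X" unfolding X_def by (rule np_plus[OF assms(1)])
    have ltX: "a + b < X" using assms(2) by (simp add: X_def)
    define g where "g n = tt a b X n - (if n = 0 then 1 else 0)" for n
    have "g sums (suminf (tt a b X) - 1)"
      unfolding g_def using sums_single[of 0 "\<lambda>_. 1::real"] tt_summable(1)[OF npX ltX]
      by (intro sums_diff summable_sums) auto
    then have gs: "suminf g = suminf (tt a b X) - 1" by (simp add: sums_iff)
    have bnd: "\<bar>g n\<bar> \<le> X0 / X * \<bar>tt a b X0 n\<bar>" for n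
      unfolding g_def by (rule tail_bound[OF X0pos XX])
    have sm: "summable (\<lambda>n. X0 / X * \<bar>tt a b X0 n\<bar>)" using sumS by (rule summable_mult)
    have sg: "summable (\<lambda>n. \<bar>g n\<bar>)"
      using bnd by (intro summable_rabs_comparison_test[OF _ sm]) auto
    have "\<bar>suminf g\<bar> \<le> (\<Sum>n. \<bar>g n\<bar>)" by (rule summable_rabs[OF sg])
    also have "\<dots> \<le> (\<Sum>n. X0 / X * \<bar>tt a b X0 n\<bar>)" by (rule suminf_le[OF bnd sg sm])
    also have "\<dots> = X0 / X * S" unfolding S_def by (rule suminf_mult[OF sumS])
    finally show ?case using gs unfolding X_def by simp
  qed
  moreover have "(\<lambda>m. X0 / (C + real m) * S) \<longlonglongrightarrow> 0"
  proof -
    have "(\<lambda>m. X0 / (C + real m)) \<longlonglongrightarrow> 0" by real_asymp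
    then show ?thesis by (rule tendsto_mult_left_zero)
  qed
  ultimately have "(\<lambda>m. suminf (tt a b (C + real m)) - 1) \<longlonglongrightarrow> 0" by (rule Lim_null_comparison)
  then show ?thesis by (rule LIM_zero_cancel)
qed

lemma gauss:
  assumes "np C" "a + b < C"
  shows "suminf (tt a b C) = Gamma C * Gamma (C - a - b) * rGamma (C - a) * rGamma (C - b)"
proof -
  have "(\<lambda>m. RR a b C m * suminf (tt a b (C + real m))) \<longlonglongrightarrow>
        Gamma C * Gamma (C - a - b) * rGamma (C - a) * rGamma (C - b) * 1"
    by (intro tendsto_mult RR_lim tail assms)
  moreover have "(\<lambda>m. RR a b C m * suminf (tt a b (C + real m))) = (\<lambda>m. suminf (tt a b C))"
    using iter[OF assms] by simp
  ultimately show ?thesis using LIMSEQ_unique[OF tendsto_const] by (metis mult_1_right)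
qed

lemma idn:
  fixes a b c q t n p dA dB dC m :: real
  assumes e: "p = q + 1" "dA = q + n + 1" "dB = q + n" "dC = c + n" "m = n + 1"
    and nz: "p \<noteq> 0" "dA \<noteq> 0" "dB \<noteq> 0" "dC \<noteq> 0" "m \<noteq> 0" "c \<noteq> 0"
  shows "(p - a) * (p - b) / p * (t * (p / dA)) - (p - c) * (t * (q / dB)) =
    t * ((a + n) * (b + n) / (dC * m)) * (m * (c - 1 - q) / dA) - t * (n * (c - 1 - q) / dB)
    + (c - a) * (c - b) / c * (t * (c / dC))"
proof -
  have "(p - a) * (p - b) / p * (t * (p / dA)) - (p - c) * (t * (q / dB)) =
     t * (((p - a) * (p - b) * dB - (p - c) * q * dA) / (dA * dB))"
    using nz by (simp add: field_simps)
  moreover have "t * ((a + n) * (b + n) / (dC * m)) * (m * (c - 1 - q) / dA) - t * (n * (c - 1 - q) / dB)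
    + (c - a) * (c - b) / c * (t * (c / dC)) =
     t * (((a + n) * (b + n) * (c - 1 - q) * dB - n * (c - 1 - q) * dA * dC + (c - a) * (c - b) * dA * dB) / (dA * dB * dC))"
    using nz by (simp add: field_simps)
  moreover have "((p - a) * (p - b) * dB - (p - c) * q * dA) / (dA * dB) =
     ((p - a) * (p - b) * dB - (p - c) * q * dA) * dC / (dA * dB * dC)"
    using nz by simp
  moreover have "((p - a) * (p - b) * dB - (p - c) * q * dA) * dC =
     ((a + n) * (b + n) * (c - 1 - q) * dB - n * (c - 1 - q) * dA * dC + (c - a) * (c - b) * dA * dB)"
    unfolding e by (simp add: algebra_simps)
  ultimately show ?thesis by simp
qed

lemma id0:
  fixes a b c p :: real
  assumes "p \<noteq> 0" "c \<noteq> 0"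
  shows "(p - a) * (p - b) / p - (p - c) = a * b / c * ((c - p) / p) + (c - a) * (c - b) / c"
  using assms by (simp add: field_simps)

lemma term_rearr: "(pa::real) * pb * pq / (pc * pq') * 1 ^ n / f = pa * pb / (pc * f) * (pq / pq')"
  by (simp add: divide_inverse ac_simps)

lemma poch_ratio:
  assumes "x > -1" "x + real n > 0"
  shows "pochhammer x n / pochhammer (x + 1) n = x / (x + real n)"
proof -
  have P: "pochhammer (x + 1) n > 0" using assms(1) by (intro pochhammer_pos) simp
  have "x * pochhammer (x + 1) n = pochhammer x n * (x + real n)" by (rule poch_shift)
  then show ?thesis using P assms(2) by (simp add: divide_simps)
qed

lemma powr_m1: "n > 0 \<Longrightarrow> real n powr (e - 1) * real n = real n powr e"
proof -
  assume n: "n > 0"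
  have "real n powr e = real n powr ((e - 1) + 1)" by simp
  also have "\<dots> = real n powr (e - 1) * real n powr 1" by (rule powr_add)
  finally show ?thesis using n by simp
qed

lemma bound_div:
  fixes t w :: "nat \<Rightarrow> real"
  assumes "eventually (\<lambda>n. \<bar>t n\<bar> \<le> M * real n powr e) sequentially"
    "eventually (\<lambda>n. \<bar>w n\<bar> \<le> B / real n) sequentially"
  shows "eventually (\<lambda>n. \<bar>t n * w n\<bar> \<le> (M * B) * real n powr (e - 1)) sequentially"
  using assms eventually_gt_at_top[of 0]
proof eventually_elim
  case (elim n)
  have "\<bar>t n * w n\<bar> = \<bar>t n\<bar> * \<bar>w n\<bar>" by (simp add: abs_mult)
  also have "\<dots> \<le> (M * real n powr e) * (B / real n)"
    using elim by (intro mult_mono) auto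
  also have "\<dots> = (M * B) * (real n powr (e - 1) * real n) / real n"
    using powr_m1[OF elim(3), of e] by simp
  also have "\<dots> = (M * B) * real n powr (e - 1)" using elim(3) by simp
  finally show ?case .
qed

theorem lemma7p4:
  fixes a b c q :: real
  assumes "c + 1 > a + b"
    and "\<forall>n::nat. c \<noteq> - real n"
    and "q > -1"
  shows "(q + 1 - a) * (q + 1 - b) / (q + 1) * hyp3F2 a b (q + 1) c (q + 2) 1
           - (q + 1 - c) * hyp3F2 a b q c (q + 1) 1
         = Gamma c * Gamma (c + 1 - a - b) * rGamma (c - a) * rGamma (c - b)"
proof -
  have npc: "np c" using assms(2) unfolding np_def .
  have npc1: "np (c + 1)" using np_plus[OF npc, of 1] by simp
  have c0: "c \<noteq> 0" using np_nz[OF npc, of 0] by simp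
  have q1: "q + 1 > 0" using assms(3) by simp
  define t where "t = tt a b c"
  define u where "u n = t n * ((q + 1) / (q + 1 + real n))" for n
  define v where "v n = t n * (if n = 0 then 1 else q / (q + real n))" for n
  have hu: "hyp3F2 a b (q + 1) c (q + 2) 1 = suminf u"
    unfolding hyp3F2_def
  proof (intro arg_cong[where f = suminf] ext)
    fix n
    have e2: "q + 2 = (q + 1) + 1" by simp
    have "pochhammer (q + 1) n / pochhammer (q + 2) n = (q + 1) / (q + 1 + real n)"
      unfolding e2 using q1 by (intro poch_ratio) auto
    then show "pochhammer a n * pochhammer b n * pochhammer (q + 1) n /
          (pochhammer c n * pochhammer (q + 2) n) * 1 ^ n / fact n = u n"
      unfolding term_rearr u_def t_def tt_def by simp
  qed
  have hv: "hyp3F2 a b q c (q + 1) 1 = suminf v"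
    unfolding hyp3F2_def
  proof (intro arg_cong[where f = suminf] ext)
    fix n
    have "pochhammer q n / pochhammer (q + 1) n = (if n = 0 then 1 else q / (q + real n))"
    proof (cases "n = 0")
      case False
      then have "q + real n > 0" using assms(3) by linarith
      then show ?thesis using False assms(3) by (simp add: poch_ratio)
    qed simp
    then show "pochhammer a n * pochhammer b n * pochhammer q n /
          (pochhammer c n * pochhammer (q + 1) n) * 1 ^ n / fact n = v n"
      unfolding term_rearr v_def t_def tt_def by simp
  qed
  obtain M where M: "M > 0" "eventually (\<lambda>n. \<bar>t n\<bar> \<le> M * real n powr (a + b - c - 1)) sequentially"
    using tt_bound[OF npc, of a b] unfolding t_def by (elim exE conjE) blast
  have e2: "a + b - c - 1 - 1 < -1" using assms(1) by simp
  have su: "summable u"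
  proof -
    have "eventually (\<lambda>n. \<bar>(q + 1) / (q + 1 + real n)\<bar> \<le> (q + 1) / real n) sequentially"
      using eventually_gt_at_top[of 0]
    proof eventually_elim
      case (elim n)
      have "\<bar>(q + 1) / (q + 1 + real n)\<bar> = (q + 1) / (q + 1 + real n)" using q1 by simp
      also have "\<dots> \<le> (q + 1) / real n" using q1 elim by (intro divide_left_mono) auto
      finally show ?case .
    qed
    from bound_div[OF M(2) this] show ?thesis unfolding u_def
      by (rule powr_bound_summable) (rule e2)
  qed
  have sv: "summable v"
  proof -
    have "eventually (\<lambda>n. \<bar>(if n = 0 then 1 else q / (q + real n))\<bar> \<le> (2 * \<bar>q\<bar>) / real n) sequentially"
      using eventually_ge_at_top[of 2]
    proof eventually_elim
      case (elim n)
      have qn: "q + real n \<ge> real n / 2" using elim assms(3) by simp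
      have n0: "real n / 2 > 0" using elim by simp
      have "\<bar>(if n = 0 then 1 else q / (q + real n))\<bar> = \<bar>q\<bar> / (q + real n)"
        using elim qn n0 by (simp add: abs_divide)
      also have "\<dots> \<le> \<bar>q\<bar> / (real n / 2)" using qn n0 by (intro divide_left_mono) auto
      also have "\<dots> = (2 * \<bar>q\<bar>) / real n" by simp
      finally show ?case .
    qed
    from bound_div[OF M(2) this] show ?thesis unfolding v_def
      by (rule powr_bound_summable) (rule e2)
  qed
  define K where "K = (c - a) * (c - b) / c"
  define al where "al = (q + 1 - a) * (q + 1 - b) / (q + 1)"
  define be where "be = q + 1 - c"
  define D where "D n = t n * (real n * (c - 1 - q) / (q + real n))" for n
  have t0: "t \<longlonglongrightarrow> 0" unfolding t_def by (rule tt_zero[OF npc assms(1)])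
  have "(\<lambda>n. real n * (c - 1 - q) / (q + real n)) \<longlonglongrightarrow> c - 1 - q" by real_asymp
  from tendsto_mult[OF t0 this] have "D \<longlonglongrightarrow> 0" unfolding D_def by simp
  then have s1: "(\<lambda>n. D (Suc n) - D n) sums (0 - D 0)" by (rule telescope_sums)
  have s2: "(\<lambda>n. K * tt a b (c + 1) n) sums (K * suminf (tt a b (c + 1)))"
    using tt_summable(1)[OF npc1, of a b] assms(1) by (intro sums_mult summable_sums) auto
  have s3: "(\<lambda>n. D (Suc n) - D n + K * tt a b (c + 1) n) sums (K * suminf (tt a b (c + 1)))"
    using sums_add[OF s1 s2] by (simp add: D_def)
  have trm: "al * u n - be * v n = D (Suc n) - D n + K * tt a b (c + 1) n" for n
  proof (cases "n = 0")
    case True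
    have t1: "t 1 = a * b / c" using tt_Suc[OF npc, of a b 0] by (simp add: t_def tt_def)
    have "al - be = a * b / c * ((c - (q + 1)) / (q + 1)) + K"
      unfolding al_def be_def K_def using q1 c0 by (intro id0) auto
    moreover have "u 0 = 1" "v 0 = 1" "D 0 = 0" using q1 by (simp_all add: u_def v_def D_def t_def tt_def)
    moreover have "tt a b (c + 1) 0 = 1" by (simp add: tt_def)
    moreover have "D (Suc 0) = a * b / c * ((c - (q + 1)) / (q + 1))"
      using t1 by (simp add: D_def algebra_simps)
    ultimately show ?thesis using True by simp
  next
    case False
    have tS: "t (Suc n) = t n * ((a + real n) * (b + real n) / ((c + real n) * (real n + 1)))"
      unfolding t_def by (rule tt_Suc[OF npc])
    have ts: "tt a b (c + 1) n = t n * (c / (c + real n))" unfolding t_def by (rule tt_shift[OF npc])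
    have qn: "q + real n > 0" using False assms(3) by linarith
    have DS: "D (Suc n) = t n * ((a + real n) * (b + real n) / ((c + real n) * (real n + 1))) *
                 ((real n + 1) * (c - 1 - q) / (q + 1 + real n))"
      unfolding D_def tS by (simp add: add_ac)
    show ?thesis unfolding DS ts
      unfolding al_def be_def K_def u_def v_def D_def using False
      by (simp only: if_False)
        (rule idn[where p = "q + 1" and dA = "q + 1 + real n" and dB = "q + real n"
            and dC = "c + real n" and m = "real n + 1"],
         use qn q1 c0 np_nz[OF npc, of n] in auto)
  qed
  have s4: "(\<lambda>n. al * u n - be * v n) sums (al * suminf u - be * suminf v)"
    using su sv by (intro sums_diff sums_mult summable_sums)
  have "al * suminf u - be * suminf v = K * suminf (tt a b (c + 1))"
    using sums_unique2[OF s4] s3 unfolding trm by blast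
  also have "suminf (tt a b (c + 1)) = Gamma (c + 1) * Gamma (c + 1 - a - b) * rGamma (c + 1 - a) * rGamma (c + 1 - b)"
    by (rule gauss[OF npc1 assms(1)])
  also have "K * \<dots> = Gamma c * Gamma (c + 1 - a - b) * rGamma (c - a) * rGamma (c - b)"
  proof -
    have g: "Gamma (c + 1) = c * Gamma c" using npc by (intro Gamma_plus1) (simp add: np_iff)
    have r1: "rGamma (c - a) = (c - a) * rGamma (c + 1 - a)"
      using rGamma_plus1[of "c - a"] by (simp add: algebra_simps)
    have r2: "rGamma (c - b) = (c - b) * rGamma (c + 1 - b)"
      using rGamma_plus1[of "c - b"] by (simp add: algebra_simps)
    show ?thesis unfolding K_def g r1 r2 using c0 by simp
  qed
  finally show ?thesis unfolding al_def be_def hu hv .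
qed

end
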